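(* Let $n\ge 2$ and let $T_n^{op}$ be the monoid of all maps $f\colon[n]\to[n]$ with product $(fg)(i)=f(g(i))$ (the opposite of the full transformation monoid $T_n$). Let $X$ be a faithful right $T_n^{op}$-set (action by total maps). Then $X$ contains a $T_n^{op}$-invariant subset isomorphic, as a right $T_n^{op}$-set, to the power set $2^{[n]}$ with action $A\cdot f=f^{-1}(A)$. Consequently, the minimal degree of a faithful action of $T_n^{op}$ by total transformations on the right is $2^n$.
   Context: $[n]=\{1,\dots,n\}$. A right $M$-set for a monoid $M$ is a set $X$ with a map $X\times M\to X$ satisfying $(xf)g=x(fg)$; it is faithful if distinct elements of $M$ act as distinct maps. The minimal degree is the least cardinality of a faithful right $T_n^{op}$-set. *)

theory Defs
  imports "HOL-Library.FuncSet"
begin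

text \<open>The carrier of T_n^op: all maps [n] -> [n], represented extensionally
  (value undefined outside {1..n}).\<close>
definition Tn :: "nat \<Rightarrow> (nat \<Rightarrow> nat) set" where
  "Tn n = {1..n} \<rightarrow>\<^sub>E {1..n}"

definition tmul :: "nat \<Rightarrow> (nat \<Rightarrow> nat) \<Rightarrow> (nat \<Rightarrow> nat) \<Rightarrow> (nat \<Rightarrow> nat)" where
  "tmul n f g = restrict (f \<circ> g) {1..n}"

definition right_act_set :: "nat \<Rightarrow> 'x set \<Rightarrow> ('x \<Rightarrow> (nat \<Rightarrow> nat) \<Rightarrow> 'x) \<Rightarrow> bool" where
  "right_act_set n X act \<longleftrightarrow>
     (\<forall>x\<in>X. \<forall>f\<in>Tn n. act x f \<in> X) \<and>
     (\<forall>x\<in>X. \<forall>f\<in>Tn n. \<forall>g\<in>Tn n. act (act x f) g = act x (tmul n f g))"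

definition faithful_on :: "nat \<Rightarrow> 'x set \<Rightarrow> ('x \<Rightarrow> (nat \<Rightarrow> nat) \<Rightarrow> 'x) \<Rightarrow> bool" where
  "faithful_on n X act \<longleftrightarrow>
     (\<forall>f\<in>Tn n. \<forall>g\<in>Tn n. (\<forall>x\<in>X. act x f = act x g) \<longrightarrow> f = g)"

definition pow_act :: "nat \<Rightarrow> nat set \<Rightarrow> (nat \<Rightarrow> nat) \<Rightarrow> nat set" where
  "pow_act n A f = {i \<in> {1..n}. f i \<in> A}"

text \<open>Minimal degree: least cardinality of a (finite) faithful right T_n^op-set.
  Carriers are taken inside nat, which loses nothing for finite sets.\<close>
definition min_degree :: "nat \<Rightarrow> nat" where
  "min_degree n = (LEAST k. \<exists>(Z::nat set) (\<alpha>::nat \<Rightarrow> (nat \<Rightarrow> nat) \<Rightarrow> nat).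
      finite Z \<and> card Z = k \<and> right_act_set n Z \<alpha> \<and> faithful_on n Z \<alpha>)"

end

theory Submission
  imports Defs "HOL-Library.Nat_Bijection"
begin

lemma embed:
  fixes n :: nat and X :: "'x set" and act :: "'x \<Rightarrow> (nat \<Rightarrow> nat) \<Rightarrow> 'x"
  assumes n2: "n \<ge> 2"
    and ra: "right_act_set n X act"
    and fa: "faithful_on n X act"
  shows "\<exists>Y (\<phi>::nat set \<Rightarrow> 'x). Y \<subseteq> X \<and> (\<forall>y\<in>Y. \<forall>f\<in>Tn n. act y f \<in> Y) \<and>
            bij_betw \<phi> (Pow {1..n}) Y \<and>
            (\<forall>A\<in>Pow {1..n}. \<forall>f\<in>Tn n. \<phi> (pow_act n A f) = act (\<phi> A) f)"
proof -
  define c where "c j = restrict (\<lambda>_. j) {1..n}" for j :: nat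
  define h where "h B = restrict (\<lambda>i. if i \<in> B then 1 else (2::nat)) {1..n}" for B
  have cl: "\<And>x f. x \<in> X \<Longrightarrow> f \<in> Tn n \<Longrightarrow> act x f \<in> X" using ra unfolding right_act_set_def by blast
  have as: "\<And>x f g. x \<in> X \<Longrightarrow> f \<in> Tn n \<Longrightarrow> g \<in> Tn n \<Longrightarrow> act (act x f) g = act x (tmul n f g)"
    using ra unfolding right_act_set_def by blast
  have c_in: "\<And>j. j \<in> {1..n} \<Longrightarrow> c j \<in> Tn n" unfolding Tn_def c_def by auto
  have h_in: "\<And>B. h B \<in> Tn n" using n2 unfolding Tn_def h_def by auto
  have c12: "c 1 \<noteq> c 2"
  proof
    assume "c 1 = c 2"
    hence "c 1 1 = c 2 1" by simp
    thus False using n2 by (simp add: c_def)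
  qed
  have c1: "c 1 \<in> Tn n" "c 2 \<in> Tn n" using n2 c_in by auto
  obtain x where x: "x \<in> X" "act x (c 1) \<noteq> act x (c 2)"
    using fa c1 c12 unfolding faithful_on_def by blast
  define \<phi> where "\<phi> B = act x (h B)" for B
  have key: "\<And>B f. f \<in> Tn n \<Longrightarrow> tmul n (h B) f = h (pow_act n B f)"
  proof -
    fix B f assume f: "f \<in> Tn n"
    show "tmul n (h B) f = h (pow_act n B f)"
    proof
      fix i
      show "tmul n (h B) f i = h (pow_act n B f) i"
        using f unfolding tmul_def h_def pow_act_def Tn_def by (auto simp: PiE_iff)
    qed
  qed
  have equi: "\<And>B f. f \<in> Tn n \<Longrightarrow> \<phi> (pow_act n B f) = act (\<phi> B) f"
    unfolding \<phi>_def using as x(1) h_in key by metis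
  have sub: "\<And>B f. pow_act n B f \<in> Pow {1..n}" unfolding pow_act_def by auto
  have hc: "\<And>B i. i \<in> {1..n} \<Longrightarrow> tmul n (h B) (c i) = (if i \<in> B then c 1 else c 2)"
  proof -
    fix B i assume i: "i \<in> {1..n}"
    show "tmul n (h B) (c i) = (if i \<in> B then c 1 else c 2)"
    proof
      fix j show "tmul n (h B) (c i) j = (if i \<in> B then c 1 else c 2) j"
        using i unfolding tmul_def h_def c_def by auto
    qed
  qed
  have sub1: "B \<subseteq> C" if "B \<subseteq> {1..n}" "\<phi> B = \<phi> C" for B C
  proof
    fix i assume i: "i \<in> B"
    hence iI: "i \<in> {1..n}" using that by auto
    show "i \<in> C"
    proof (rule ccontr)
      assume nc: "i \<notin> C"
      have "act (\<phi> B) (c i) = act x (c 1)"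
        unfolding \<phi>_def using as[OF x(1) h_in c_in[OF iI]] hc[OF iI] i by simp
      moreover have "act (\<phi> C) (c i) = act x (c 2)"
        unfolding \<phi>_def using as[OF x(1) h_in c_in[OF iI]] hc[OF iI] nc by simp
      ultimately show False using that x(2) by simp
    qed
  qed
  have inj: "inj_on \<phi> (Pow {1..n})"
    by (rule inj_onI) (metis PowD sub1 subset_antisym)
  show ?thesis
  proof (intro exI conjI)
    show "\<phi> ` Pow {1..n} \<subseteq> X" unfolding \<phi>_def using cl x(1) h_in by blast
    show "\<forall>y\<in>\<phi> ` Pow {1..n}. \<forall>f\<in>Tn n. act y f \<in> \<phi> ` Pow {1..n}"
    proof (intro ballI)
      fix y f assume y: "y \<in> \<phi> ` Pow {1..n}" and f: "f \<in> Tn n"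
      then obtain B where B: "B \<in> Pow {1..n}" "y = \<phi> B" by blast
      have "act y f = \<phi> (pow_act n B f)" using equi[OF f] B by simp
      thus "act y f \<in> \<phi> ` Pow {1..n}" using sub by blast
    qed
    show "bij_betw \<phi> (Pow {1..n}) (\<phi> ` Pow {1..n})" using inj by (simp add: bij_betw_def)
    show "\<forall>A\<in>Pow {1..n}. \<forall>f\<in>Tn n. \<phi> (pow_act n A f) = act (\<phi> A) f" using equi by blast
  qed
qed

lemma pow_model:
  "\<exists>(Z::nat set) (\<alpha>::nat \<Rightarrow> (nat \<Rightarrow> nat) \<Rightarrow> nat).
      finite Z \<and> card Z = 2 ^ n \<and> right_act_set n Z \<alpha> \<and> faithful_on n Z \<alpha>"
proof -
  define Z where "Z = set_encode ` Pow {1..n}"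
  define \<alpha> where "\<alpha> z f = set_encode (pow_act n (set_decode z) f)" for z f
  have fin: "\<And>A. A \<in> Pow {1..n} \<Longrightarrow> finite A" using finite_subset by blast
  have inj: "inj_on set_encode (Pow {1..n})"
    by (rule inj_on_subset[OF inj_on_set_encode]) (auto intro: finite_subset)
  have sub: "\<And>B f. pow_act n B f \<in> Pow {1..n}" unfolding pow_act_def by auto
  have assoc: "pow_act n (pow_act n A f) g = pow_act n A (tmul n f g)" if "g \<in> Tn n" for A f g
    using that unfolding pow_act_def tmul_def Tn_def by (auto simp: PiE_iff)
  have "finite Z" unfolding Z_def by simp
  moreover have "card Z = 2 ^ n" unfolding Z_def using card_image[OF inj] by (simp add: card_Pow)
  moreover have "right_act_set n Z \<alpha>"
    unfolding right_act_set_def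
  proof (intro conjI ballI)
    fix z f assume "z \<in> Z" "f \<in> Tn n"
    show "\<alpha> z f \<in> Z" unfolding \<alpha>_def Z_def using sub by blast
  next
    fix z f g assume z: "z \<in> Z" and "f \<in> Tn n" and g: "g \<in> Tn n"
    have "finite (pow_act n (set_decode z) f)" using sub fin by blast
    thus "\<alpha> (\<alpha> z f) g = \<alpha> z (tmul n f g)" unfolding \<alpha>_def using assoc[OF g] by simp
  qed
  moreover have "faithful_on n Z \<alpha>"
    unfolding faithful_on_def
  proof (intro ballI impI)
    fix f g assume f: "f \<in> Tn n" and g: "g \<in> Tn n" and eq: "\<forall>x\<in>Z. \<alpha> x f = \<alpha> x g"
    show "f = g"
    proof (rule ccontr)
      assume "f \<noteq> g"
      then obtain i where i: "f i \<noteq> g i" by blast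
      have iI: "i \<in> {1..n}" using f g i unfolding Tn_def by (metis PiE_arb)
      have fi: "f i \<in> {1..n}" using f iI unfolding Tn_def by auto
      let ?A = "{f i}"
      have AZ: "set_encode ?A \<in> Z" unfolding Z_def using fi by (intro imageI) auto
      have "\<alpha> (set_encode ?A) f = \<alpha> (set_encode ?A) g" using eq AZ by blast
      hence "set_encode (pow_act n ?A f) = set_encode (pow_act n ?A g)" unfolding \<alpha>_def
        by (simp only: set_encode_inverse finite.intros)
      hence "pow_act n ?A f = pow_act n ?A g" using inj_onD[OF inj _ sub sub] by blast
      moreover have "i \<in> pow_act n ?A f" "i \<notin> pow_act n ?A g" using iI i unfolding pow_act_def by auto
      ultimately show False by simp
    qed
  qed
  ultimately show ?thesis by blast
qed

theorem theorem3p2: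
  fixes n :: nat and X :: "'x set" and act :: "'x \<Rightarrow> (nat \<Rightarrow> nat) \<Rightarrow> 'x"
  assumes "n \<ge> 2"
    and "right_act_set n X act"
    and "faithful_on n X act"
  shows "(\<exists>Y (\<phi>::nat set \<Rightarrow> 'x). Y \<subseteq> X \<and> (\<forall>y\<in>Y. \<forall>f\<in>Tn n. act y f \<in> Y) \<and>
            bij_betw \<phi> (Pow {1..n}) Y \<and>
            (\<forall>A\<in>Pow {1..n}. \<forall>f\<in>Tn n. \<phi> (pow_act n A f) = act (\<phi> A) f))
         \<and> min_degree n = 2 ^ n"
proof
  show "\<exists>Y (\<phi>::nat set \<Rightarrow> 'x). Y \<subseteq> X \<and> (\<forall>y\<in>Y. \<forall>f\<in>Tn n. act y f \<in> Y) \<and>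
            bij_betw \<phi> (Pow {1..n}) Y \<and>
            (\<forall>A\<in>Pow {1..n}. \<forall>f\<in>Tn n. \<phi> (pow_act n A f) = act (\<phi> A) f)"
    using embed assms by blast
  show "min_degree n = 2 ^ n"
    unfolding min_degree_def
  proof (rule Least_equality)
    show "\<exists>(Z::nat set) (\<alpha>::nat \<Rightarrow> (nat \<Rightarrow> nat) \<Rightarrow> nat).
      finite Z \<and> card Z = 2 ^ n \<and> right_act_set n Z \<alpha> \<and> faithful_on n Z \<alpha>" by (rule pow_model)
  next
    fix k assume "\<exists>(Z::nat set) (\<alpha>::nat \<Rightarrow> (nat \<Rightarrow> nat) \<Rightarrow> nat).
      finite Z \<and> card Z = k \<and> right_act_set n Z \<alpha> \<and> faithful_on n Z \<alpha>"
    then obtain Z :: "nat set" and \<alpha> :: "nat \<Rightarrow> (nat \<Rightarrow> nat) \<Rightarrow> nat" where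
      Z: "finite Z" "card Z = k" "right_act_set n Z \<alpha>" "faithful_on n Z \<alpha>" by blast
    obtain Y and \<phi> :: "nat set \<Rightarrow> nat" where Y: "Y \<subseteq> Z" "bij_betw \<phi> (Pow {1..n}) Y"
      using embed[OF assms(1) Z(3) Z(4)] by blast
    have "card Y = 2 ^ n" using bij_betw_same_card[OF Y(2)] by (simp add: card_Pow)
    moreover have "card Y \<le> card Z" using card_mono[OF Z(1) Y(1)] .
    ultimately show "2 ^ n \<le> k" using Z(2) by simp
  qed
qed

end
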